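(* Let $n\ge1$ and $a\in L^\infty(D_n)$. The following are equivalent: (0) $a$ is a quasi-hyperbolic moment map symbol, i.e. there is a measurable function $g$ on $\mu(D_n)$ with $a=g\circ\mu$ almost everywhere; (1) $a$ is $\mathbb{T}^{n-1}\times\mathbb{R}_+$-invariant, i.e. for every $(t',s)\in\mathbb{T}^{n-1}\times\mathbb{R}_+$, $a((t',s)\cdot z)=a(z)$ for almost every $z\in D_n$; (2) $a=f\circ H$ almost everywhere for some measurable function $f$; (3) $a=f\circ\widetilde{H}$ almost everywhere for some measurable function $f$.
   Context: $D_n=\{z=(z',z_n)\in\mathbb{C}^{n-1}\times\mathbb{C}:\operatorname{Im}z_n-|z'|^2>0\}$ (the Siegel domain). The quasi-hyperbolic action of $\mathbb{T}^{n-1}\times\mathbb{R}_+$ ($\mathbb{T}$ the unit circle, $\mathbb{R}_+=(0,\infty)$) on $D_n$ is $(t',s)\cdot z=(s^{1/2}t_1z_1,\dots,s^{1/2}t_{n-1}z_{n-1},sz_n)$. Its moment map (with respect to the Bergman Kähler form of $D_n$) is $\mu(z)=-\frac{1}{2(\operatorname{Im}z_n-|z'|^2)}(2|z_1|^2,\dots,2|z_{n-1}|^2,\operatorname{Re}z_n)$. Further, $H(z)=\frac{1}{\operatorname{Im}z_n-|z'|^2}(|z_1|^2,\dots,|z_{n-1}|^2,\operatorname{Re}z_n)$ and $\widetilde{H}(z)=\Big(\frac{|z_1|^2}{\operatorname{Im}z_n-|z'|^2},\dots,\frac{|z_{n-1}|^2}{\operatorname{Im}z_n-|z'|^2},\frac{\operatorname{Re}z_n}{\operatorname{Im}z_n}\Big)$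 for $z\in D_n$. *)

theory Defs
  imports "HOL-Analysis.Analysis"
begin

text \<open>Points of C^n are modelled as complex ^ 'n, where 'n is a finite type with n = CARD('n)
  elements, and the distinguished index l plays the role of the last coordinate z_n; the
  remaining indices are the coordinates of z'.\<close>

definition rho :: "'n::finite \<Rightarrow> complex ^ 'n \<Rightarrow> real" where
  "rho l z = Im (z $ l) - (\<Sum>j\<in>UNIV - {l}. (cmod (z $ j))\<^sup>2)"

definition siegel :: "'n::finite \<Rightarrow> (complex ^ 'n) set" where
  "siegel l = {z. rho l z > 0}"

text \<open>Quasi-hyperbolic action of (t', s); t l is irrelevant.\<close>
definition qh_action :: "'n::finite \<Rightarrow> ('n \<Rightarrow> complex) \<Rightarrow> real \<Rightarrow> complex ^ 'n \<Rightarrow> complex ^ 'n" where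
  "qh_action l t s z = (\<chi> j. if j = l then complex_of_real s * z $ l
                              else complex_of_real (sqrt s) * t j * z $ j)"

definition qh_moment :: "'n::finite \<Rightarrow> complex ^ 'n \<Rightarrow> real ^ 'n" where
  "qh_moment l z = (\<chi> j. - (1 / (2 * rho l z)) *
       (if j = l then Re (z $ l) else 2 * (cmod (z $ j))\<^sup>2))"

definition qh_H :: "'n::finite \<Rightarrow> complex ^ 'n \<Rightarrow> real ^ 'n" where
  "qh_H l z = (\<chi> j. (1 / rho l z) *
       (if j = l then Re (z $ l) else (cmod (z $ j))\<^sup>2))"

definition qh_Htilde :: "'n::finite \<Rightarrow> complex ^ 'n \<Rightarrow> real ^ 'n" where
  "qh_Htilde l z = (\<chi> j. if j = l then Re (z $ l) / Im (z $ l)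
                          else (cmod (z $ j))\<^sup>2 / rho l z)"

definition Linfty_on :: "('a::euclidean_space) set \<Rightarrow> ('a \<Rightarrow> complex) \<Rightarrow> bool" where
  "Linfty_on D a \<longleftrightarrow> a \<in> borel_measurable (lebesgue_on D) \<and>
     (\<exists>C. AE z in lebesgue_on D. cmod (a z) \<le> C)"

end

theory Submission imports Defs begin

lemma open_siegel: "open (siegel l)"
proof -
  have "continuous_on UNIV (rho l)"
    unfolding rho_def by (intro continuous_intros)
  then have "open (rho l -` {0<..})"
    by (intro continuous_open_vimage) (auto simp: continuous_on_eq_continuous_at)
  moreover have "siegel l = rho l -` {0<..}" by (auto simp: siegel_def)
  ultimately show ?thesis by simp
qed

lemma siegel_sets[measurable]: "siegel l \<in> sets borel"
  using open_siegel by (rule borel_open)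

definition act :: "'n::finite \<Rightarrow> real ^ 'n \<Rightarrow> complex ^ 'n \<Rightarrow> complex ^ 'n" where
  "act l v z = qh_action l (\<lambda>j. cis (v $ j)) (exp (v $ l)) z"

lemma act_add: "act l v (act l w z) = act l (v + w) z"
  unfolding act_def qh_action_def
  by (auto simp: vec_eq_iff exp_add real_sqrt_mult cis_mult[symmetric] algebra_simps)

lemma linear_qh_action: "linear (qh_action l t s)"
  by (rule linearI) (auto simp: qh_action_def vec_eq_iff algebra_simps scaleR_conv_of_real)

lemma qh_action_inv:
  assumes "\<And>j. j \<noteq> l \<Longrightarrow> t j \<noteq> 0" "s > 0"
  shows "qh_action l (\<lambda>j. inverse (t j)) (1/s) (qh_action l t s z) = z"
  using assms unfolding qh_action_def
  by (auto simp: vec_eq_iff real_sqrt_divide field_simps)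

lemma rho_qh_action:
  assumes "\<And>j. j \<noteq> l \<Longrightarrow> cmod (t j) = 1" "s > 0"
  shows "rho l (qh_action l t s z) = s * rho l z"
proof -
  have "(\<Sum>j\<in>UNIV - {l}. (cmod (qh_action l t s z $ j))\<^sup>2) = (\<Sum>j\<in>UNIV - {l}. s * (cmod (z $ j))\<^sup>2)"
    using assms by (intro sum.cong) (auto simp: qh_action_def norm_mult power_mult_distrib)
  then show ?thesis using assms
    by (simp add: rho_def qh_action_def sum_distrib_left[symmetric] algebra_simps)
qed

lemma moment_qh_action:
  assumes "\<And>j. j \<noteq> l \<Longrightarrow> cmod (t j) = 1" "s > 0"
  shows "qh_moment l (qh_action l t s z) = qh_moment l z"
  using assms rho_qh_action[of l t s z, OF assms]
  by (auto simp: qh_moment_def vec_eq_iff qh_action_def norm_mult power_mult_distrib)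

lemma siegel_qh_action:
  assumes "\<And>j. j \<noteq> l \<Longrightarrow> cmod (t j) = 1" "s > 0" "z \<in> siegel l"
  shows "qh_action l t s z \<in> siegel l"
  using assms rho_qh_action[of l t s z, OF assms(1,2)] by (simp add: siegel_def)

lemma AE_lon:
  assumes "D \<in> sets borel"
  shows "(AE z in lebesgue_on D. P z) \<longleftrightarrow> (AE z in lborel. z \<in> D \<longrightarrow> P z)"
proof -
  have "D \<inter> space lebesgue \<in> sets lebesgue" using assms by auto
  then show ?thesis by (simp add: AE_restrict_space_iff AE_completion_iff)
qed

lemma AE_lborel_linear_pre:
  fixes f g :: "'a::euclidean_space \<Rightarrow> 'a"
  assumes "linear g" "\<And>x. g (f x) = x" "AE x in lborel. P x"
  shows "AE x in lborel. P (f x)"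
proof -
  from assms(3) have "AE x in lebesgue. P x" by (simp add: AE_completion_iff)
  then obtain N where N: "N \<in> null_sets lebesgue" "{x. \<not> P x} \<subseteq> N"
    unfolding eventually_ae_filter by auto
  have "negligible N" using N(1) negligible_iff_null_sets by blast
  then have "negligible (g ` N)"
    by (intro negligible_differentiable_image_negligible linear_imp_differentiable_on assms(1)) auto
  then have "g ` N \<in> null_sets lebesgue" using negligible_iff_null_sets by blast
  moreover have "{x \<in> space lebesgue. \<not> P (f x)} \<subseteq> g ` N"
  proof
    fix x assume "x \<in> {x \<in> space lebesgue. \<not> P (f x)}"
    then have "f x \<in> N" using N(2) by auto
    then show "x \<in> g ` N" using assms(2)[of x] by (metis image_eqI)
  qed
  ultimately have "AE x in lebesgue. P (f x)" by (rule AE_I')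
  then show ?thesis by (simp add: AE_completion_iff)
qed

lemma AE_qh_action:
  assumes "\<And>j. j \<noteq> l \<Longrightarrow> cmod (t j) = 1" "s > 0" "AE z in lborel. P z"
  shows "AE z in lborel. P (qh_action l t s z)"
proof (rule AE_lborel_linear_pre[OF linear_qh_action _ assms(3)])
  fix x
  have "\<And>j. j \<noteq> l \<Longrightarrow> t j \<noteq> 0" using assms(1) by force
  then show "qh_action l (\<lambda>j. inverse (t j)) (1/s) (qh_action l t s x) = x"
    using qh_action_inv[of l t s x] assms(2) by blast
qed

lemma continuous_act: "continuous_on UNIV (\<lambda>p. act l (fst p) (snd p))"
  unfolding act_def qh_action_def
  apply (intro continuous_on_vec_lambda)
  subgoal for j by (cases "j = l") (auto intro!: continuous_intros)
  done

lemma borel_act[measurable]: "(\<lambda>p. act l (fst p) (snd p)) \<in> borel_measurable borel"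
  by (rule borel_measurable_continuous_onI[OF continuous_act])

lemma borel_act2[measurable (raw)]:
  assumes "f \<in> borel_measurable M" "g \<in> borel_measurable M"
  shows "(\<lambda>x. act l (f x) (g x)) \<in> borel_measurable M"
proof -
  have "(\<lambda>x. (f x, g x)) \<in> M \<rightarrow>\<^sub>M borel \<Otimes>\<^sub>M borel"
    using assms by (intro measurable_Pair)
  then have "(\<lambda>x. (f x, g x)) \<in> borel_measurable M" by (simp add: borel_prod)
  from measurable_compose[OF this borel_act[of l]] show ?thesis by simp
qed

definition sect :: "'n::finite \<Rightarrow> real ^ 'n \<Rightarrow> complex ^ 'n" where
  "sect l m = (\<chi> j. if j = l then complex_of_real (-2 * m $ l) +
      \<i> * complex_of_real (1 + (\<Sum>i\<in>UNIV-{l}. - m $ i))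
    else complex_of_real (sqrt (- m $ j)))"

lemma borel_sect[measurable]: "sect l \<in> borel_measurable borel"
  unfolding sect_def
  apply (intro borel_measurable_continuous_onI continuous_on_vec_lambda)
  subgoal for j by (cases "j = l") (auto intro!: continuous_intros)
  done

lemma cis_Arg_mult: "cis (- Arg x) * x = complex_of_real (cmod x)"
proof -
  have 1: "cis (- Arg x) * cis (Arg x) = 1" by (simp add: cis_mult)
  have "cis (- Arg x) * x = cis (- Arg x) * (complex_of_real (cmod x) * cis (Arg x))"
    using rcis_cmod_Arg[of x] by (simp add: rcis_def)
  also have "\<dots> = complex_of_real (cmod x) * (cis (- Arg x) * cis (Arg x))"
    by (simp only: mult_ac)
  finally show ?thesis using 1 by simp
qed

lemma sect_moment:
  assumes "z \<in> siegel l"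
  shows "act l (\<chi> j. if j = l then - ln (rho l z) else - Arg (z $ j)) z = sect l (qh_moment l z)"
proof -
  define r where "r = rho l z"
  have r: "r > 0" using assms by (simp add: siegel_def r_def)
  have sum: "(\<Sum>i\<in>UNIV-{l}. - qh_moment l z $ i) = (\<Sum>i\<in>UNIV-{l}. (cmod (z $ i))\<^sup>2) / r"
    by (simp add: qh_moment_def sum_divide_distrib r_def)
  have im: "Im (z $ l) = r + (\<Sum>i\<in>UNIV-{l}. (cmod (z $ i))\<^sup>2)"
    by (simp add: r_def rho_def)
  show ?thesis
  proof (subst vec_eq_iff, intro allI)
    fix j
    show "act l (\<chi> j. if j = l then - ln (rho l z) else - Arg (z $ j)) z $ j = sect l (qh_moment l z) $ j"
    proof (cases "j = l")
      case True
      have "complex_of_real (exp (- ln r)) * z $ l = complex_of_real (Re (z $ l) / r) + \<i> * complex_of_real (Im (z $ l) / r)"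
        using r by (simp add: exp_minus complex_eq_iff field_simps)
      also have "Im (z $ l) / r = 1 + (\<Sum>i\<in>UNIV-{l}. (cmod (z $ i))\<^sup>2) / r"
        using r im by (simp add: field_simps)
      finally show ?thesis using True r
        by (simp add: act_def qh_action_def sect_def sum r_def[symmetric] qh_moment_def sum_divide_distrib)
    next
      case False
      have "complex_of_real (sqrt (exp (- ln r))) * cis (- Arg (z $ j)) * z $ j
          = complex_of_real (sqrt (exp (- ln r))) * complex_of_real (cmod (z $ j))"
        by (simp add: cis_Arg_mult mult.assoc)
      also have "\<dots> = complex_of_real (sqrt ((cmod (z $ j))\<^sup>2 / r))"
        using r by (simp add: exp_minus real_sqrt_divide field_simps)
      finally show ?thesis using False r
        by (simp add: act_def qh_action_def sect_def r_def[symmetric] qh_moment_def)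
    qed
  qed
qed

lemma borel_version:
  fixes a :: "'a::euclidean_space \<Rightarrow> complex"
  assumes "a \<in> borel_measurable (lebesgue_on D)" "D \<in> sets borel"
  obtains a' where "a' \<in> borel_measurable borel" "AE z in lborel. z \<in> D \<longrightarrow> a z = a' z"
proof -
  define ae where "ae = (\<lambda>z. if z \<in> D then a z else 0)"
  have "ae \<in> borel_measurable lebesgue"
    unfolding ae_def using borel_measurable_if[of D a] assms by auto
  then have m1: "(\<lambda>z. Re (ae z)) \<in> borel_measurable (completion lborel)"
    and m2: "(\<lambda>z. Im (ae z)) \<in> borel_measurable (completion lborel)" by auto
  obtain r where r: "r \<in> borel_measurable lborel" "AE x in lborel. Re (ae x) = r x"
    using completion_ex_borel_measurable_real[OF m1] by blast
  obtain i where i: "i \<in> borel_measurable lborel" "AE x in lborel. Im (ae x) = i x"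
    using completion_ex_borel_measurable_real[OF m2] by blast
  show ?thesis
  proof (rule that[of "\<lambda>z. Complex (r z) (i z)"])
    show "(\<lambda>z. Complex (r z) (i z)) \<in> borel_measurable borel"
      using r(1) i(1) by (simp add: borel_measurable_complex_iff)
    show "AE z in lborel. z \<in> D \<longrightarrow> a z = Complex (r z) (i z)"
      using r(2) i(2) by eventually_elim (auto simp: ae_def complex_eq_iff)
  qed
qed

lemma measure_unit_box: "measure lborel (cbox (0::real^'n::finite) One) = 1"
proof -
  have "\<And>b::real^'n. b \<in> Basis \<Longrightarrow> One \<bullet> b = (1::real)"
    by (simp add: inner_sum_left sum.If_cases inner_Basis)
  then show ?thesis by (simp add: measure_lborel_cbox_eq)
qed

lemma inv_to_moment:
  fixes l :: "'n::finite" and a :: "complex ^ 'n \<Rightarrow> complex"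
  assumes ameas: "a \<in> borel_measurable (lebesgue_on (siegel l))"
  and inv: "\<forall>t s. (\<forall>j. j \<noteq> l \<longrightarrow> cmod (t j) = 1) \<longrightarrow> s > 0 \<longrightarrow>
        (AE z in lebesgue_on (siegel l). a (qh_action l t s z) = a z)"
  shows "\<exists>g :: real ^ 'n \<Rightarrow> complex.
        g \<in> borel_measurable (restrict_space borel (qh_moment l ` siegel l)) \<and>
        (AE z in lebesgue_on (siegel l). a z = g (qh_moment l z))"
proof -
  define D where "D = siegel l"
  have Dm[measurable]: "D \<in> sets borel" unfolding D_def by (rule siegel_sets)
  obtain a' where a'[measurable]: "a' \<in> borel_measurable borel"
    and aa': "AE z in lborel. z \<in> D \<longrightarrow> a z = a' z"
    using borel_version[OF ameas[folded D_def] Dm] by blast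
  have B: "AE z in lborel. z \<in> D \<longrightarrow> a' (act l v z) = a' z" for v
  proof -
    define t where "t = (\<lambda>j. cis (v $ j))"
    define s where "s = exp (v $ l)"
    have t1: "\<And>j. j \<noteq> l \<Longrightarrow> cmod (t j) = 1" by (simp add: t_def)
    have s0: "s > 0" by (simp add: s_def)
    have "AE z in lebesgue_on D. a (qh_action l t s z) = a z"
      using inv[rule_format, of t s] t1 s0 unfolding D_def by simp
    then have 1: "AE z in lborel. z \<in> D \<longrightarrow> a (qh_action l t s z) = a z"
      by (rule AE_lon[OF Dm, THEN iffD1])
    have 2: "AE z in lborel. qh_action l t s z \<in> D \<longrightarrow> a (qh_action l t s z) = a' (qh_action l t s z)"
      by (rule AE_qh_action[OF t1 s0 aa'])
    have 3: "z \<in> D \<Longrightarrow> qh_action l t s z \<in> D" for z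
      unfolding D_def by (rule siegel_qh_action[OF t1 s0])
    from 1 2 aa' show ?thesis
      by eventually_elim (use 3 in \<open>auto simp: act_def t_def s_def\<close>)
  qed
  have C: "AE z in lborel. AE v in lborel. z \<in> D \<longrightarrow> a' (act l v z) = a' z"
  proof -
    have ps: "pair_sigma_finite (lborel :: (real^'n) measure) (lborel :: (complex^'n) measure)"
      by (intro pair_sigma_finite.intro) (rule lborel.sigma_finite_measure_axioms)+
    have m: "{x \<in> space (lborel \<Otimes>\<^sub>M lborel). snd x \<in> D \<longrightarrow> a' (act l (fst x) (snd x)) = a' (snd x)}
       \<in> sets ((lborel :: (real^'n) measure) \<Otimes>\<^sub>M (lborel :: (complex^'n) measure))"
      by measurable
    have "AE v in lborel. AE z in lborel. z \<in> D \<longrightarrow> a' (act l v z) = a' z"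
      using B by (intro always_eventually) auto
    then show ?thesis using pair_sigma_finite.AE_commute[OF ps m] by simp
  qed
  define Bx where "Bx = cbox (0::real^'n) One"
  have Bx[measurable]: "Bx \<in> sets borel" unfolding Bx_def by simp
  define g where "g = (\<lambda>m. \<integral>v. indicator Bx v *\<^sub>R a' (act l v (sect l m)) \<partial>lborel)"
  have gm: "g \<in> borel_measurable borel"
  proof -
    have "(\<lambda>(m, v). indicator Bx v *\<^sub>R a' (act l v (sect l m)))
        \<in> borel_measurable ((lborel :: (real^'n) measure) \<Otimes>\<^sub>M (lborel :: (real^'n) measure))"
      unfolding split_beta' by measurable
    from lborel.borel_measurable_lebesgue_integral[OF this]
    have "g \<in> borel_measurable lborel" unfolding g_def by simp
    then show ?thesis by simp
  qed
  have E: "g (qh_moment l z) = a' z"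
    if zD: "z \<in> D" and Q: "AE v in lborel. a' (act l v z) = a' z" for z
  proof -
    define w where "w = (\<chi> j. if j = l then - ln (rho l z) else - Arg (z $ j))"
    have w: "act l w z = sect l (qh_moment l z)"
      using sect_moment[of z l] zD by (simp add: w_def D_def)
    have "AE v in distr lborel borel ((+) w). a' (act l v z) = a' z"
      using Q by (subst lborel_distr_plus[of w])
    moreover have "(AE v in distr lborel borel ((+) w). a' (act l v z) = a' z)
        = (AE v in lborel. a' (act l (w + v) z) = a' z)"
      by (rule AE_distr_iff) measurable
    ultimately have Q2: "AE v in lborel. a' (act l (w + v) z) = a' z" by simp
    have "g (qh_moment l z) = (\<integral>v. indicator Bx v *\<^sub>R a' (act l (v + w) z) \<partial>lborel)"
      unfolding g_def w[symmetric] act_add ..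
    also have "\<dots> = (\<integral>v. indicator Bx v *\<^sub>R a' z \<partial>lborel)"
    proof (rule integral_cong_AE)
      show "(\<lambda>v. indicator Bx v *\<^sub>R a' (act l (v + w) z)) \<in> borel_measurable lborel"
        by measurable
      show "(\<lambda>v. indicator Bx v *\<^sub>R a' z) \<in> borel_measurable lborel"
        by measurable
      show "AE v in lborel. indicator Bx v *\<^sub>R a' (act l (v + w) z) = indicator Bx v *\<^sub>R a' z"
        using Q2 by eventually_elim (simp only: add.commute)
    qed
    also have "\<dots> = measure lborel Bx *\<^sub>R a' z"
      by (subst integral_scaleR_left) (auto simp: Bx_def emeasure_lborel_cbox_finite)
    also have "\<dots> = a' z" by (simp add: Bx_def measure_unit_box)
    finally show ?thesis .
  qed
  have "AE z in lborel. z \<in> D \<longrightarrow> a z = g (qh_moment l z)"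
    using aa' C by eventually_elim (auto simp: E)
  then have "AE z in lebesgue_on D. a z = g (qh_moment l z)"
    by (rule AE_lon[OF Dm, THEN iffD2])
  then have "AE z in lebesgue_on (siegel l). a z = g (qh_moment l z)"
    by (simp only: D_def)
  moreover have "g \<in> borel_measurable (restrict_space borel (qh_moment l ` siegel l))"
    using gm by (rule measurable_restrict_space1)
  ultimately show ?thesis by blast
qed

lemma moment_to_inv:
  fixes l :: "'n::finite" and a :: "complex ^ 'n \<Rightarrow> complex"
  assumes "AE z in lebesgue_on (siegel l). a z = g (qh_moment l z)"
  shows "\<forall>t s. (\<forall>j. j \<noteq> l \<longrightarrow> cmod (t j) = 1) \<longrightarrow> s > 0 \<longrightarrow>
        (AE z in lebesgue_on (siegel l). a (qh_action l t s z) = a z)"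
proof (intro allI impI)
  fix t s assume t: "\<forall>j. j \<noteq> l \<longrightarrow> cmod (t j) = 1" and s: "(s::real) > 0"
  have t1: "\<And>j. j \<noteq> l \<Longrightarrow> cmod (t j) = 1" using t by blast
  have Dm: "siegel l \<in> sets borel" by (rule siegel_sets)
  have aa: "AE z in lborel. z \<in> siegel l \<longrightarrow> a z = g (qh_moment l z)"
    using assms by (rule AE_lon[OF Dm, THEN iffD1])
  have 2: "AE z in lborel. qh_action l t s z \<in> siegel l \<longrightarrow> a (qh_action l t s z) = g (qh_moment l (qh_action l t s z))"
    by (rule AE_qh_action[OF t1 s aa])
  have "AE z in lborel. z \<in> siegel l \<longrightarrow> a (qh_action l t s z) = a z"
    using aa 2
  proof eventually_elim
    case (elim z)
    show ?case
    proof
      assume z: "z \<in> siegel l"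
      have "qh_action l t s z \<in> siegel l" by (rule siegel_qh_action[OF t1 s z])
      then have "a (qh_action l t s z) = g (qh_moment l (qh_action l t s z))" using elim by blast
      also have "\<dots> = g (qh_moment l z)" using moment_qh_action[of l t s z, OF t1 s] by simp
      also have "\<dots> = a z" using elim z by simp
      finally show "a (qh_action l t s z) = a z" .
    qed
  qed
  then show "AE z in lebesgue_on (siegel l). a (qh_action l t s z) = a z"
    by (rule AE_lon[OF Dm, THEN iffD2])
qed

lemma transfer:
  fixes F1 F2 :: "'a::euclidean_space \<Rightarrow> 'b::euclidean_space" and a :: "'a \<Rightarrow> complex"
  assumes phi: "\<And>z. z \<in> D \<Longrightarrow> \<phi> (F1 z) = F2 z" "\<phi> \<in> borel_measurable borel"
    and f: "f \<in> borel_measurable (restrict_space borel (F2 ` D))"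
    and ae: "AE z in lebesgue_on D. a z = f (F2 z)"
  shows "\<exists>g. g \<in> borel_measurable (restrict_space borel (F1 ` D)) \<and>
      (AE z in lebesgue_on D. a z = g (F1 z))"
proof (intro exI conjI)
  have "\<phi> \<in> restrict_space borel (F1 ` D) \<rightarrow>\<^sub>M restrict_space borel (F2 ` D)"
    by (rule measurable_restrict_space3[OF phi(2)]) (auto simp: phi(1)[symmetric])
  then show "(\<lambda>x. f (\<phi> x)) \<in> borel_measurable (restrict_space borel (F1 ` D))"
    using f by (rule measurable_compose)
  have "AE z in lebesgue_on D. z \<in> D" by (rule AE_I2) simp
  then show "AE z in lebesgue_on D. a z = f (\<phi> (F1 z))"
    using ae by eventually_elim (simp add: phi(1))
qed

lemma rho_pos: "z \<in> siegel l \<Longrightarrow> rho l z > 0" by (simp add: siegel_def)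

lemma im_eq: "Im (z $ l) = rho l z + (\<Sum>i\<in>UNIV-{l}. (cmod (z $ i))\<^sup>2)"
  by (simp add: rho_def)

lemma phi_mu_H:
  assumes "m = qh_moment l z"
  shows "(\<chi> j. if j = l then -2 * m $ l else - m $ j) = qh_H l z"
  using assms by (auto simp: vec_eq_iff qh_moment_def qh_H_def)

lemma phi_H_mu:
  assumes "x = qh_H l z"
  shows "(\<chi> j. if j = l then - x $ l / 2 else - x $ j) = qh_moment l z"
  using assms by (auto simp: vec_eq_iff qh_moment_def qh_H_def)

lemma sum_H: 
  assumes "z \<in> siegel l"
  shows "(\<Sum>i\<in>UNIV-{l}. \<bar>qh_moment l z $ i\<bar>) = (\<Sum>i\<in>UNIV-{l}. (cmod (z $ i))\<^sup>2) / rho l z"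
    and "(\<Sum>i\<in>UNIV-{l}. qh_Htilde l z $ i) = (\<Sum>i\<in>UNIV-{l}. (cmod (z $ i))\<^sup>2) / rho l z"
  using rho_pos[OF assms(1)]
  by (auto simp: qh_moment_def qh_Htilde_def sum_divide_distrib intro!: sum.cong)

lemma phi_mu_Ht:
  assumes "z \<in> siegel l" and that: "m = qh_moment l z"
  shows "(\<chi> j. if j = l then -2 * m $ l / (1 + (\<Sum>i\<in>UNIV-{l}. \<bar>m $ i\<bar>)) else - m $ j) = qh_Htilde l z"
proof -
  have r: "rho l z > 0" by (rule rho_pos[OF assms(1)])
  define S where "S = (\<Sum>i\<in>UNIV-{l}. (cmod (z $ i))\<^sup>2)"
  have S: "S \<ge> 0" unfolding S_def by (simp add: sum_nonneg)
  have "-2 * m $ l / (1 + S / rho l z) = Re (z $ l) / Im (z $ l)"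
    using r S im_eq[of z l] that by (simp add: qh_moment_def S_def[symmetric] field_simps)
  then show ?thesis using that sum_H(1)[OF assms(1)] r
    by (auto simp: vec_eq_iff qh_moment_def qh_Htilde_def S_def)
qed

lemma phi_Ht_mu:
  assumes "z \<in> siegel l" and that: "x = qh_Htilde l z"
  shows "(\<chi> j. if j = l then - (x $ l * (1 + (\<Sum>i\<in>UNIV-{l}. x $ i))) / 2 else - x $ j) = qh_moment l z"
proof -
  have r: "rho l z > 0" by (rule rho_pos[OF assms(1)])
  define S where "S = (\<Sum>i\<in>UNIV-{l}. (cmod (z $ i))\<^sup>2)"
  have S: "S \<ge> 0" unfolding S_def by (simp add: sum_nonneg)
  have I: "Im (z $ l) = S + rho l z" using im_eq[of z l] by (simp add: S_def)
  have nz: "S + rho l z \<noteq> 0" using r S by linarith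
  have "Re (z $ l) / Im (z $ l) * (1 + S / rho l z) = Re (z $ l) / (S + rho l z) * ((S + rho l z) / rho l z)"
    using r by (simp add: I field_simps)
  also have "\<dots> = Re (z $ l) / rho l z" using nz by simp
  finally have "- (Re (z $ l) / Im (z $ l) * (1 + S / rho l z)) / 2 = - (1 / (2 * rho l z)) * Re (z $ l)"
    by simp
  then show ?thesis using that sum_H(2)[OF assms(1)] r
    by (auto simp: vec_eq_iff qh_moment_def qh_Htilde_def S_def)
qed

lemma borel_phi1: "(\<lambda>x::real^'n::finite. \<chi> j. if j = l then - x $ l / 2 else - x $ j) \<in> borel_measurable borel"
  apply (intro borel_measurable_continuous_onI continuous_on_vec_lambda)
  subgoal for j by (cases "j = l") (auto intro!: continuous_intros)
  done

lemma borel_phi2: "(\<lambda>x::real^'n::finite. \<chi> j. if j = l then -2 * x $ l else - x $ j) \<in> borel_measurable borel"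
  apply (intro borel_measurable_continuous_onI continuous_on_vec_lambda)
  subgoal for j by (cases "j = l") (auto intro!: continuous_intros)
  done

lemma borel_phi3: "(\<lambda>x::real^'n::finite. \<chi> j. if j = l then -2 * x $ l / (1 + (\<Sum>i\<in>UNIV-{l}. \<bar>x $ i\<bar>)) else - x $ j)
   \<in> borel_measurable borel"
proof -
  have h: "\<And>x::real^'n. 1 + (\<Sum>i\<in>UNIV-{l}. \<bar>x $ i\<bar>) \<noteq> 0"
  proof -
    fix x :: "real^'n"
    have "1 + (\<Sum>i\<in>UNIV-{l}. \<bar>x $ i\<bar>) > 0" by (intro add_pos_nonneg sum_nonneg) auto
    then show "1 + (\<Sum>i\<in>UNIV-{l}. \<bar>x $ i\<bar>) \<noteq> 0" by simp
  qed
  show ?thesis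
    apply (intro borel_measurable_continuous_onI continuous_on_vec_lambda)
    subgoal for j by (cases "j = l") (auto intro!: continuous_intros simp: h)
    done
qed

lemma borel_phi4: "(\<lambda>x::real^'n::finite. \<chi> j. if j = l then - (x $ l * (1 + (\<Sum>i\<in>UNIV-{l}. x $ i))) / 2 else - x $ j)
   \<in> borel_measurable borel"
  apply (intro borel_measurable_continuous_onI continuous_on_vec_lambda)
  subgoal for j by (cases "j = l") (auto intro!: continuous_intros)
  done

theorem lemma5p4:
  fixes l :: "'n::finite" and a :: "complex ^ 'n \<Rightarrow> complex"
  assumes "Linfty_on (siegel l) a"
  shows
   "((\<exists>g :: real ^ 'n \<Rightarrow> complex.
        g \<in> borel_measurable (restrict_space borel (qh_moment l ` siegel l)) \<and>
        (AE z in lebesgue_on (siegel l). a z = g (qh_moment l z)))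
     \<longleftrightarrow> (\<forall>t s. (\<forall>j. j \<noteq> l \<longrightarrow> cmod (t j) = 1) \<longrightarrow> s > 0 \<longrightarrow>
        (AE z in lebesgue_on (siegel l). a (qh_action l t s z) = a z)))
    \<and> ((\<exists>g :: real ^ 'n \<Rightarrow> complex.
        g \<in> borel_measurable (restrict_space borel (qh_moment l ` siegel l)) \<and>
        (AE z in lebesgue_on (siegel l). a z = g (qh_moment l z)))
     \<longleftrightarrow> (\<exists>f :: real ^ 'n \<Rightarrow> complex.
        f \<in> borel_measurable (restrict_space borel (qh_H l ` siegel l)) \<and>
        (AE z in lebesgue_on (siegel l). a z = f (qh_H l z))))
    \<and> ((\<exists>g :: real ^ 'n \<Rightarrow> complex.
        g \<in> borel_measurable (restrict_space borel (qh_moment l ` siegel l)) \<and>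
        (AE z in lebesgue_on (siegel l). a z = g (qh_moment l z)))
     \<longleftrightarrow> (\<exists>f :: real ^ 'n \<Rightarrow> complex.
        f \<in> borel_measurable (restrict_space borel (qh_Htilde l ` siegel l)) \<and>
        (AE z in lebesgue_on (siegel l). a z = f (qh_Htilde l z))))"
proof -
  have am: "a \<in> borel_measurable (lebesgue_on (siegel l))" using assms unfolding Linfty_on_def by blast
  show ?thesis
  proof (intro conjI iffI)
    assume "\<exists>g :: real ^ 'n \<Rightarrow> complex.
        g \<in> borel_measurable (restrict_space borel (qh_moment l ` siegel l)) \<and>
        (AE z in lebesgue_on (siegel l). a z = g (qh_moment l z))"
    then obtain g where "AE z in lebesgue_on (siegel l). a z = g (qh_moment l z)" by blast
    then show "\<forall>t s. (\<forall>j. j \<noteq> l \<longrightarrow> cmod (t j) = 1) \<longrightarrow> s > 0 \<longrightarrow>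
        (AE z in lebesgue_on (siegel l). a (qh_action l t s z) = a z)"
      by (rule moment_to_inv)
  next
    assume "\<forall>t s. (\<forall>j. j \<noteq> l \<longrightarrow> cmod (t j) = 1) \<longrightarrow> s > 0 \<longrightarrow>
        (AE z in lebesgue_on (siegel l). a (qh_action l t s z) = a z)"
    then show "\<exists>g :: real ^ 'n \<Rightarrow> complex.
        g \<in> borel_measurable (restrict_space borel (qh_moment l ` siegel l)) \<and>
        (AE z in lebesgue_on (siegel l). a z = g (qh_moment l z))"
      by (rule inv_to_moment[OF am])
  next
    assume "\<exists>g :: real ^ 'n \<Rightarrow> complex.
        g \<in> borel_measurable (restrict_space borel (qh_moment l ` siegel l)) \<and>
        (AE z in lebesgue_on (siegel l). a z = g (qh_moment l z))"
    then obtain g where g: "g \<in> borel_measurable (restrict_space borel (qh_moment l ` siegel l))"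
      "AE z in lebesgue_on (siegel l). a z = g (qh_moment l z)" by blast
    show "\<exists>f :: real ^ 'n \<Rightarrow> complex.
        f \<in> borel_measurable (restrict_space borel (qh_H l ` siegel l)) \<and>
        (AE z in lebesgue_on (siegel l). a z = f (qh_H l z))"
      by (rule transfer[OF _ borel_phi1[of l] g]) (rule phi_H_mu[OF refl])
  next
    assume "\<exists>f :: real ^ 'n \<Rightarrow> complex.
        f \<in> borel_measurable (restrict_space borel (qh_H l ` siegel l)) \<and>
        (AE z in lebesgue_on (siegel l). a z = f (qh_H l z))"
    then obtain g where g: "g \<in> borel_measurable (restrict_space borel (qh_H l ` siegel l))"
      "AE z in lebesgue_on (siegel l). a z = g (qh_H l z)" by blast
    show "\<exists>g :: real ^ 'n \<Rightarrow> complex.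
        g \<in> borel_measurable (restrict_space borel (qh_moment l ` siegel l)) \<and>
        (AE z in lebesgue_on (siegel l). a z = g (qh_moment l z))"
      by (rule transfer[OF _ borel_phi2[of l] g]) (rule phi_mu_H[OF refl])
  next
    assume "\<exists>g :: real ^ 'n \<Rightarrow> complex.
        g \<in> borel_measurable (restrict_space borel (qh_moment l ` siegel l)) \<and>
        (AE z in lebesgue_on (siegel l). a z = g (qh_moment l z))"
    then obtain g where g: "g \<in> borel_measurable (restrict_space borel (qh_moment l ` siegel l))"
      "AE z in lebesgue_on (siegel l). a z = g (qh_moment l z)" by blast
    show "\<exists>f :: real ^ 'n \<Rightarrow> complex.
        f \<in> borel_measurable (restrict_space borel (qh_Htilde l ` siegel l)) \<and>
        (AE z in lebesgue_on (siegel l). a z = f (qh_Htilde l z))"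
      by (rule transfer[OF _ borel_phi4[of l] g]) (erule phi_Ht_mu[OF _ refl])
  next
    assume "\<exists>f :: real ^ 'n \<Rightarrow> complex.
        f \<in> borel_measurable (restrict_space borel (qh_Htilde l ` siegel l)) \<and>
        (AE z in lebesgue_on (siegel l). a z = f (qh_Htilde l z))"
    then obtain g where g: "g \<in> borel_measurable (restrict_space borel (qh_Htilde l ` siegel l))"
      "AE z in lebesgue_on (siegel l). a z = g (qh_Htilde l z)" by blast
    show "\<exists>g :: real ^ 'n \<Rightarrow> complex.
        g \<in> borel_measurable (restrict_space borel (qh_moment l ` siegel l)) \<and>
        (AE z in lebesgue_on (siegel l). a z = g (qh_moment l z))"
      by (rule transfer[OF _ borel_phi3[of l] g]) (erule phi_mu_Ht[OF _ refl])
  qed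
qed

end
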